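(* With the notation of the context, let $f(g)$ be the number of $k$-tuples of nonnegative integers $[g_1,\dots,g_k]$ with $\sum_i g_i=g$ and $g_i\le\alpha_i g$ for all $i$. Then, as formal power series, \[ F(x)=\sum_{g=0}^\infty f(g)x^g=\frac{\sum_{\mathbf{a}\in\mathcal{A}}x^{b(\mathbf{a})}}{\prod_{i=1}^k\left(1-x^{N/n_i}\right)}. \]
   Context: Let $k\ge 2$ and let $\alpha_1,\dots,\alpha_k$ be nonnegative rational numbers such that the sum of any $k-1$ of them is at most $1$ and $\sum_i\alpha_i>1$. Write $\alpha_i=m_i/n_i$ in lowest terms with $n_i\ge 1$. Set $N=\prod_{i=1}^k n_i$, $A=N(\sum_{i=1}^k\alpha_i-1)$ (a positive integer), and $\hat\alpha_i=1-\sum_{j\ne i}\alpha_j$. Let $\mathcal{A}$ be the set of integer $k$-tuples $\mathbf{a}=(a_1,\dots,a_k)$ with $0\le a_i<A$ for all $i$ such that for every $1\le j\le k$ the integer $N\hat\alpha_j\frac{a_j}{n_j}+N\alpha_j\sum_{i\ne j}\frac{a_i}{n_i}$ is divisible by $A$. For $\mathbf{a}\in\mathcal{A}$ put $b(\mathbf{a})=\frac{N}{A}\sum_{i=1}^k\frac{a_i}{n_i}$ (a nonnegative integer). *)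

theory Defs
  imports Complex_Main "HOL-Library.FuncSet" "HOL-Computational_Algebra.Formal_Power_Series"
begin

text \<open>Tuples (alpha_1,...,alpha_k) are indexed by {..<k}. n_i is the denominator in lowest terms.\<close>

definition den :: "rat \<Rightarrow> int" where
  "den q = snd (quotient_of q)"

definition bigN :: "nat \<Rightarrow> (nat \<Rightarrow> rat) \<Rightarrow> int" where
  "bigN k \<alpha> = (\<Prod>i<k. den (\<alpha> i))"

definition bigA :: "nat \<Rightarrow> (nat \<Rightarrow> rat) \<Rightarrow> int" where
  "bigA k \<alpha> = \<lfloor>of_int (bigN k \<alpha>) * ((\<Sum>i<k. \<alpha> i) - 1)\<rfloor>"

definition alpha_hat :: "nat \<Rightarrow> (nat \<Rightarrow> rat) \<Rightarrow> nat \<Rightarrow> rat" where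
  "alpha_hat k \<alpha> j = 1 - (\<Sum>i\<in>{..<k} - {j}. \<alpha> i)"

definition setA :: "nat \<Rightarrow> (nat \<Rightarrow> rat) \<Rightarrow> (nat \<Rightarrow> int) set" where
  "setA k \<alpha> = {a \<in> Pi\<^sub>E {..<k} (\<lambda>_. {0..<bigA k \<alpha>}).
     \<forall>j<k. \<exists>z::int.
       of_int (bigN k \<alpha>) * alpha_hat k \<alpha> j * (of_int (a j) / of_int (den (\<alpha> j)))
       + of_int (bigN k \<alpha>) * \<alpha> j * (\<Sum>i\<in>{..<k} - {j}. of_int (a i) / of_int (den (\<alpha> i)))
       = of_int (bigA k \<alpha> * z)}"

definition bval :: "nat \<Rightarrow> (nat \<Rightarrow> rat) \<Rightarrow> (nat \<Rightarrow> int) \<Rightarrow> rat" where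
  "bval k \<alpha> a = of_int (bigN k \<alpha>) / of_int (bigA k \<alpha>) * (\<Sum>i<k. of_int (a i) / of_int (den (\<alpha> i)))"

definition fcount :: "nat \<Rightarrow> (nat \<Rightarrow> rat) \<Rightarrow> nat \<Rightarrow> nat" where
  "fcount k \<alpha> g = card {gs \<in> Pi\<^sub>E {..<k} (\<lambda>_. {0..g}).
      (\<Sum>i<k. gs i) = g \<and> (\<forall>i<k. of_nat (gs i) \<le> \<alpha> i * of_nat g)}"

end

theory Submission
  imports Defs
begin

definition Cset :: "nat set \<Rightarrow> (nat \<Rightarrow> nat) \<Rightarrow> nat \<Rightarrow> (nat \<Rightarrow> nat) set" where
  "Cset I dd n = {c \<in> Pi\<^sub>E I (\<lambda>_. {..n}). (\<Sum>i\<in>I. c i * dd i) = n}"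

definition geo :: "nat \<Rightarrow> rat fps" where
  "geo dd = Abs_fps (\<lambda>n. if dd dvd n then 1 else 0)"

lemma dvd_minus_self_nat: "(d::nat) \<le> n \<Longrightarrow> d dvd n - d \<longleftrightarrow> d dvd n"
  by (metis dvd_add_triv_right_iff le_add_diff_inverse2)

lemma geo_inv: "dd > 0 \<Longrightarrow> (1 - fps_X ^ dd) * geo dd = 1"
proof (rule fps_ext)
  fix n assume dp: "dd > 0"
  have "fps_nth ((1 - fps_X ^ dd) * geo dd) n = fps_nth (geo dd) n - fps_nth (fps_X ^ dd * geo dd) n"
    by (simp add: algebra_simps)
  also have "\<dots> = (if n = 0 then 1 else 0)"
    unfolding fps_X_power_mult_nth geo_def using dp
    by (auto simp: dvd_imp_le dvd_minus_self_nat)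
  finally show "fps_nth ((1 - fps_X ^ dd) * geo dd) n = fps_nth (1::rat fps) n" by simp
qed

lemma Cset_finite: "finite I \<Longrightarrow> finite (Cset I dd n)"
  unfolding Cset_def by (rule finite_subset[of _ "Pi\<^sub>E I (\<lambda>_. {..n})"]) (auto intro: finite_PiE)

lemma prod_geo:
  assumes "finite I" "\<forall>i\<in>I. dd i > 0"
  shows "fps_nth (\<Prod>i\<in>I. geo (dd i)) n = of_nat (card (Cset I dd n))"
  using assms
proof (induction I arbitrary: n rule: finite_induct)
  case empty
  have "Cset {} dd n = (if n = 0 then {\<lambda>_. undefined} else {})"
    unfolding Cset_def by auto
  then show ?case by simp
next
  case (insert x F)
  have dx: "dd x > 0" using insert.prems by simp
  define J where "J = {j \<in> {0..n}. dd x dvd j}"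
  have "fps_nth (\<Prod>i\<in>insert x F. geo (dd i)) n = fps_nth (geo (dd x) * (\<Prod>i\<in>F. geo (dd i))) n"
    using insert.hyps by simp
  also have "\<dots> = (\<Sum>j=0..n. (if dd x dvd j then of_nat (card (Cset F dd (n - j))) else 0))"
    unfolding fps_mult_nth using insert.IH insert.prems by (intro sum.cong) (auto simp: geo_def)
  also have "\<dots> = (\<Sum>j\<in>J. of_nat (card (Cset F dd (n - j))))"
    unfolding J_def by (rule sum.inter_filter[symmetric]) simp
  also have "\<dots> = of_nat (card (SIGMA j:J. Cset F dd (n - j)))"
    using insert.hyps by (subst card_SigmaI) (auto simp: J_def Cset_finite)
  also have "card (SIGMA j:J. Cset F dd (n - j)) = card (Cset (insert x F) dd n)"
  proof (rule bij_betw_same_card)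
    show "bij_betw (\<lambda>(j, c). c(x := j div dd x)) (SIGMA j:J. Cset F dd (n - j)) (Cset (insert x F) dd n)"
    proof (rule bij_betw_byWitness[where f' = "\<lambda>c. (c x * dd x, c(x := undefined))"])
      show "\<forall>p\<in>(SIGMA j:J. Cset F dd (n - j)). (\<lambda>c. (c x * dd x, c(x := undefined))) ((\<lambda>(j, c). c(x := j div dd x)) p) = p"
      proof
        fix p assume "p \<in> (SIGMA j:J. Cset F dd (n - j))"
        then obtain j c where p: "p = (j, c)" "j \<in> J" "c \<in> Cset F dd (n - j)" by blast
        have "c x = undefined" using p(3) insert.hyps unfolding Cset_def by (auto simp: PiE_iff extensional_def)
        then have "c(x := undefined) = c" by auto
        moreover have "j div dd x * dd x = j" using p(2) unfolding J_def by simp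
        ultimately show "(\<lambda>c. (c x * dd x, c(x := undefined))) ((\<lambda>(j, c). c(x := j div dd x)) p) = p"
          using p by simp
      qed
      show "\<forall>c\<in>Cset (insert x F) dd n. (\<lambda>(j, c). c(x := j div dd x)) ((\<lambda>c. (c x * dd x, c(x := undefined))) c) = c"
        using dx by auto
      show "(\<lambda>(j, c). c(x := j div dd x)) ` (SIGMA j:J. Cset F dd (n - j)) \<subseteq> Cset (insert x F) dd n"
      proof clarify
        fix j c assume j: "j \<in> J" and c: "c \<in> Cset F dd (n - j)"
        have jd: "j div dd x * dd x = j" and jn: "j \<le> n" using j unfolding J_def by auto
        have "(\<Sum>i\<in>F. (c(x := j div dd x)) i * dd i) = (\<Sum>i\<in>F. c i * dd i)"
          using insert.hyps by (intro sum.cong) auto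
        then have s: "(\<Sum>i\<in>insert x F. (c(x := j div dd x)) i * dd i) = n"
          using insert.hyps c jd jn unfolding Cset_def by simp
        have "j div dd x \<le> n" using jn by (meson div_le_dividend le_trans)
        then show "c(x := j div dd x) \<in> Cset (insert x F) dd n"
          using c s unfolding Cset_def by (auto simp: PiE_iff extensional_def)
      qed
      show "(\<lambda>c. (c x * dd x, c(x := undefined))) ` Cset (insert x F) dd n \<subseteq> (SIGMA j:J. Cset F dd (n - j))"
      proof (rule image_subsetI)
        fix c assume c: "c \<in> Cset (insert x F) dd n"
        have s: "c x * dd x + (\<Sum>i\<in>F. c i * dd i) = n" using c insert.hyps unfolding Cset_def by simp
        have "(\<Sum>i\<in>F. (c(x := undefined)) i * dd i) = (\<Sum>i\<in>F. c i * dd i)"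
          using insert.hyps by (intro sum.cong) auto
        have le: "c i \<le> (\<Sum>i\<in>F. c i * dd i)" if "i \<in> F" for i
        proof -
          have "c i \<le> c i * dd i" using insert.prems that by (simp add: Suc_le_eq)
          also have "\<dots> \<le> (\<Sum>i\<in>F. c i * dd i)" by (rule member_le_sum) (use that insert.hyps in auto)
          finally show ?thesis .
        qed
        have "c(x := undefined) \<in> Cset F dd (n - c x * dd x)"
          using c s le insert.hyps \<open>(\<Sum>i\<in>F. (c(x := undefined)) i * dd i) = (\<Sum>i\<in>F. c i * dd i)\<close>
          unfolding Cset_def by (auto simp: PiE_iff extensional_def)
        moreover have "c x * dd x \<in> J" unfolding J_def using s by auto
        ultimately show "(\<lambda>c. (c x * dd x, c(x := undefined))) c \<in> (SIGMA j:J. Cset F dd (n - j))" by simp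
      qed
    qed
  qed
  finally show ?case .
qed

locale cone =
  fixes k :: nat and \<alpha> :: "nat \<Rightarrow> rat"
  assumes pos: "\<forall>i<k. \<alpha> i \<ge> 0"
    and sub: "\<forall>j<k. (\<Sum>i\<in>{..<k} - {j}. \<alpha> i) \<le> 1"
    and big: "(\<Sum>i<k. \<alpha> i) > 1"
begin

definition n where "n i = den (\<alpha> i)"
definition m where "m i = fst (quotient_of (\<alpha> i))"
abbreviation "N \<equiv> bigN k \<alpha>"
abbreviation "A \<equiv> bigA k \<alpha>"
definition d where "d i = N div n i"

lemma n_pos: "n i > 0"
  unfolding n_def den_def by (metis prod.collapse quotient_of_denom_pos)

lemma alpha_eq: "\<alpha> i = of_int (m i) / of_int (n i)"
  unfolding n_def den_def m_def by (metis prod.collapse quotient_of_div)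

lemma n_nz[simp]: "(of_int (n i) :: rat) \<noteq> 0"
  using n_pos[of i] by simp

lemma m_eq: "of_int (m i) = \<alpha> i * of_int (n i)"
  using alpha_eq[of i] n_pos[of i] by simp

lemma N_split: "i < k \<Longrightarrow> N = n i * (\<Prod>l\<in>{..<k}-{i}. n l)"
  unfolding bigN_def n_def by (simp add: prod.remove)

lemma d_eq: "i < k \<Longrightarrow> d i = (\<Prod>l\<in>{..<k}-{i}. n l)"
  unfolding d_def using N_split n_pos by (metis nonzero_mult_div_cancel_left not_less_iff_gr_or_eq)

lemma N_nd: "i < k \<Longrightarrow> N = n i * d i"
  using N_split d_eq by simp

lemma N_pos: "N > 0"
  unfolding bigN_def using n_pos n_def by (simp add: prod_pos)

lemma d_pos: "i < k \<Longrightarrow> d i > 0"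
  using d_eq n_pos by (simp add: prod_pos)

lemma dvd_d: "i < k \<Longrightarrow> j < k \<Longrightarrow> i \<noteq> j \<Longrightarrow> n j dvd d i"
  using d_eq by (simp add: dvd_prodI)

definition e where "e i j = m j * (d i div n j)"

lemma alpha_d: "i < k \<Longrightarrow> j < k \<Longrightarrow> i \<noteq> j \<Longrightarrow> \<alpha> j * of_int (d i) = of_int (e i j)"
proof -
  assume h: "i < k" "j < k" "i \<noteq> j"
  obtain q where q: "d i = n j * q" using dvd_d[OF h] by blast
  have "d i div n j = q" using q n_pos[of j] by simp
  then show ?thesis unfolding e_def using q alpha_eq[of j] n_pos[of j] by simp
qed

lemma Nalpha: "i < k \<Longrightarrow> of_int N * \<alpha> i = of_int (m i * d i)"
  using N_nd[of i] alpha_eq[of i] n_pos[of i] by simp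

lemma A_eq: "of_int A = of_int N * ((\<Sum>i<k. \<alpha> i) - 1)"
proof -
  have "of_int N * (\<Sum>i<k. \<alpha> i) = (\<Sum>i<k. (of_int (m i * d i)::rat))"
    unfolding sum_distrib_left by (rule sum.cong) (auto simp: Nalpha)
  then have eq: "of_int N * ((\<Sum>i<k. \<alpha> i) - 1) = (of_int ((\<Sum>i<k. m i * d i) - N) :: rat)"
    by (simp add: algebra_simps)
  have "A = (\<Sum>i<k. m i * d i) - N" unfolding bigA_def eq by (rule floor_of_int)
  then show ?thesis using eq by simp
qed

lemma A_pos: "A > 0"
proof -
  have "(of_int A :: rat) > 0" using A_eq N_pos big by simp
  then show ?thesis by simp
qed


definition Gq :: "(nat \<Rightarrow> int) \<Rightarrow> rat" where
  "Gq t = (\<Sum>i<k. of_int (t i) * of_int (d i)) / of_int A"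
definition Yq :: "(nat \<Rightarrow> int) \<Rightarrow> nat \<Rightarrow> rat" where
  "Yq t j = \<alpha> j * Gq t - of_int (t j) / of_int (n j)"

lemma AGq: "of_int A * Gq t = (\<Sum>i<k. of_int (t i) * of_int (d i))"
  unfolding Gq_def using A_pos by simp

lemma AG: "of_int A * Gq t = of_int N * (\<Sum>i<k. of_int (t i) / of_int (n i))"
proof -
  have "of_int A * Gq t = (\<Sum>i<k. of_int (t i) * of_int (d i))" by (rule AGq)
  also have "\<dots> = (\<Sum>i<k. of_int N * (of_int (t i) / of_int (n i)) :: rat)"
  proof (rule sum.cong)
    fix i assume "i \<in> {..<k}"
    then show "of_int (t i) * of_int (d i) = (of_int N * (of_int (t i) / of_int (n i)) :: rat)"
      using N_nd[of i] n_pos[of i] by simp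
  qed simp
  finally show ?thesis by (simp add: sum_distrib_left)
qed

lemma sum_split: "j < k \<Longrightarrow> (\<Sum>i<k. f i) = f j + (\<Sum>i\<in>{..<k}-{j}. f i)"
  by (simp add: sum.remove)

lemma A_split: "j < k \<Longrightarrow> of_int A = of_int N * (\<alpha> j - alpha_hat k \<alpha> j)"
  unfolding A_eq alpha_hat_def using sum_split[of j \<alpha>] by simp

lemma AY: "j < k \<Longrightarrow> of_int A * Yq t j = of_int N * alpha_hat k \<alpha> j * (of_int (t j) / of_int (n j))
   + of_int N * \<alpha> j * (\<Sum>i\<in>{..<k}-{j}. of_int (t i) / of_int (n i))"
proof -
  assume j: "j < k"
  have "of_int A * Yq t j = \<alpha> j * (of_int A * Gq t) - of_int A * (of_int (t j) / of_int (n j))"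
    unfolding Yq_def by (simp add: algebra_simps)
  also have "\<dots> = \<alpha> j * (of_int N * (of_int (t j) / of_int (n j) + (\<Sum>i\<in>{..<k}-{j}. of_int (t i) / of_int (n i))))
     - of_int N * (\<alpha> j - alpha_hat k \<alpha> j) * (of_int (t j) / of_int (n j))"
    unfolding AG using sum_split[OF j, of "\<lambda>i. of_int (t i) / of_int (n i) :: rat"] A_split[OF j] by simp
  finally show ?thesis by (simp add: algebra_simps)
qed

lemma bval_eq: "bval k \<alpha> a = Gq a"
proof -
  have "of_int A * bval k \<alpha> a = of_int A * Gq a"
    unfolding AG bval_def n_def using A_pos by simp
  then show ?thesis using A_pos by simp
qed

lemma setA_iff: "a \<in> setA k \<alpha> \<longleftrightarrow> a \<in> Pi\<^sub>E {..<k} (\<lambda>_. {0..<A}) \<and> (\<forall>j<k. \<exists>z. Yq a j = of_int z)"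
proof -
  have "(of_int N * alpha_hat k \<alpha> j * (of_int (a j) / of_int (den (\<alpha> j)))
       + of_int N * \<alpha> j * (\<Sum>i\<in>{..<k} - {j}. of_int (a i) / of_int (den (\<alpha> i)))
       = of_int (A * z)) \<longleftrightarrow> Yq a j = of_int z" if "j < k" for j z
  proof -
    have "(of_int N * alpha_hat k \<alpha> j * (of_int (a j) / of_int (den (\<alpha> j)))
       + of_int N * \<alpha> j * (\<Sum>i\<in>{..<k} - {j}. of_int (a i) / of_int (den (\<alpha> i)))) = of_int A * Yq a j"
      using AY[OF that, of a] unfolding n_def by simp
    then show ?thesis using A_pos by simp
  qed
  then show ?thesis unfolding setA_def by auto
qed

lemma Gq_shift: "Gq (\<lambda>i. t i + A * c i) = Gq t + of_int (\<Sum>i<k. c i * d i)"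
proof -
  have "of_int A * Gq (\<lambda>i. t i + A * c i) = of_int A * (Gq t + of_int (\<Sum>i<k. c i * d i))"
    unfolding distrib_left AGq by (simp add: algebra_simps sum.distrib sum_distrib_left)
  then show ?thesis using A_pos by simp
qed

lemma Yq_shift: "j < k \<Longrightarrow> \<exists>z. Yq (\<lambda>i. t i + A * c i) j = Yq t j + of_int z"
proof -
  assume j: "j < k"
  define C' where "C' = (\<Sum>i\<in>{..<k}-{j}. c i * d i)"
  define S1 where "S1 = (\<Sum>i\<in>{..<k}-{j}. c i * e i j)"
  define S2 where "S2 = (\<Sum>i\<in>{..<k}-{j}. e j i)"
  define Sa where "Sa = (\<Sum>i\<in>{..<k}-{j}. \<alpha> i)"
  have h1: "(\<Sum>i<k. c i * d i) = c j * d j + C'"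
    unfolding C'_def using sum_split[OF j] .
  have h2: "\<alpha> j * of_int C' = of_int S1"
    unfolding C'_def S1_def of_int_sum sum_distrib_left by (rule sum.cong) (use j alpha_d in auto)
  have h4: "Sa * of_int (d j) = of_int S2"
    unfolding Sa_def S2_def of_int_sum sum_distrib_right by (rule sum.cong) (use j alpha_d in auto)
  have h3: "of_int A = of_int (n j) * of_int (d j) * (\<alpha> j + Sa - 1)"
    using A_eq sum_split[OF j, of \<alpha>] N_nd[OF j] unfolding Sa_def by simp
  define G where "G = Gq t"
  have "Yq (\<lambda>i. t i + A * c i) j = \<alpha> j * (G + of_int (c j * d j + C'))
      - (of_int (t j) + of_int A * of_int (c j)) / of_int (n j)"
    unfolding Yq_def Gq_shift h1 G_def by simp
  also have "\<dots> = \<alpha> j * G - of_int (t j) / of_int (n j) + (\<alpha> j * of_int C' + \<alpha> j * (of_int (c j) * of_int (d j))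
      - of_int (c j) * (of_int A / of_int (n j)))"
    by (simp add: add_divide_distrib ring_distribs)
  also have "of_int A / of_int (n j) = of_int (d j) * (\<alpha> j + Sa - 1)"
    unfolding h3 using n_pos[of j] by simp
  also have "\<alpha> j * of_int C' + \<alpha> j * (of_int (c j) * of_int (d j)) - of_int (c j) * (of_int (d j) * (\<alpha> j + Sa - 1))
     = of_int S1 + of_int (c j) * of_int (d j) - of_int (c j) * (Sa * of_int (d j))"
    unfolding h2[symmetric] by (simp add: ring_distribs)
  also have "\<dots> = of_int (S1 + c j * d j - c j * S2)" unfolding h4 by simp
  finally show ?thesis unfolding Yq_def G_def by blast
qed

lemma Gq_cong: "(\<And>i. i < k \<Longrightarrow> t i = t' i) \<Longrightarrow> Gq t = Gq t'"
  unfolding Gq_def by (metis (no_types, lifting) lessThan_iff sum.cong)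

lemma Yq_cong: "(\<And>i. i < k \<Longrightarrow> t i = t' i) \<Longrightarrow> j < k \<Longrightarrow> Yq t j = Yq t' j"
  unfolding Yq_def using Gq_cong by metis

lemma sumY: "(\<Sum>j<k. Yq t j) = Gq t"
proof -
  have "of_int N * (((\<Sum>i<k. \<alpha> i) - 1) * Gq t) = of_int N * (\<Sum>i<k. of_int (t i) / of_int (n i))"
    by (metis AG A_eq mult.assoc)
  then have s: "(\<Sum>i<k. of_int (t i) / of_int (n i)) = ((\<Sum>i<k. \<alpha> i) - 1) * Gq t"
    using N_pos by simp
  have "(\<Sum>j<k. Yq t j) = (\<Sum>i<k. \<alpha> i) * Gq t - (\<Sum>i<k. of_int (t i) / of_int (n i))"
    unfolding Yq_def by (simp add: sum_subtractf sum_distrib_right)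
  then show ?thesis unfolding s by (simp add: algebra_simps)
qed

lemma ah_nonneg: "j < k \<Longrightarrow> alpha_hat k \<alpha> j \<ge> 0"
  unfolding alpha_hat_def using sub by simp

lemma Yq_nonneg: "j < k \<Longrightarrow> (\<And>i. i < k \<Longrightarrow> t i \<ge> 0) \<Longrightarrow> Yq t j \<ge> 0"
proof -
  assume j: "j < k" and t: "\<And>i. i < k \<Longrightarrow> t i \<ge> 0"
  have "(\<Sum>i\<in>{..<k}-{j}. of_int (t i) / of_int (n i)) \<ge> (0::rat)"
    using t n_pos by (intro sum_nonneg divide_nonneg_pos) auto
  moreover have "of_int (t j) / of_int (n j) \<ge> (0::rat)" using t[OF j] n_pos[of j] by simp
  ultimately have "of_int A * Yq t j \<ge> 0" unfolding AY[OF j]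
    using N_pos ah_nonneg[OF j] pos j by (intro add_nonneg_nonneg mult_nonneg_nonneg) auto
  then show ?thesis using A_pos by (simp add: zero_le_mult_iff)
qed

lemma Gq_nonneg: "(\<And>i. i < k \<Longrightarrow> t i \<ge> 0) \<Longrightarrow> Gq t \<ge> 0"
  unfolding Gq_def using A_pos d_pos by (intro divide_nonneg_pos sum_nonneg) (auto simp: less_imp_le)

definition T :: "nat \<Rightarrow> (nat \<Rightarrow> nat) \<Rightarrow> nat \<Rightarrow> int" where
  "T g y i = m i * int g - n i * int (y i)"

lemma Gq_T: "(\<Sum>i<k. y i) = g \<Longrightarrow> Gq (T g y) = of_nat g"
proof -
  assume s: "(\<Sum>i<k. y i) = g"
  have "(\<Sum>i<k. of_int (T g y i) / of_int (n i)) = (\<Sum>i<k. \<alpha> i * of_nat g - of_nat (y i) :: rat)"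
  proof (rule sum.cong)
    fix i
    have "(of_int (T g y i) :: rat) = of_int (n i) * (\<alpha> i * of_nat g - of_nat (y i))"
      by (simp add: T_def m_eq algebra_simps)
    then show "of_int (T g y i) / of_int (n i) = (\<alpha> i * of_nat g - of_nat (y i) :: rat)"
      using n_pos[of i] by simp
  qed simp
  also have "\<dots> = ((\<Sum>i<k. \<alpha> i) - 1) * of_nat g"
    using s by (simp add: sum_subtractf sum_distrib_right sum_distrib_left algebra_simps flip: of_nat_sum)
  finally have "of_int A * Gq (T g y) = of_int A * of_nat g"
    by (simp only: AG) (simp add: A_eq)
  then show ?thesis using A_pos by simp
qed

lemma Yq_T: "Gq (T g y) = of_nat g \<Longrightarrow> Yq (T g y) j = of_nat (y j)"
  unfolding Yq_def T_def using n_pos[of j] by (simp add: m_eq field_simps)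

lemma T_Yq: "Gq t = of_nat g \<Longrightarrow> of_nat y = Yq t i \<Longrightarrow> m i * int g - n i * int y = t i"
proof -
  assume "Gq t = of_nat g" "of_nat y = Yq t i"
  then have "(of_int (m i * int g - n i * int y) :: rat) = of_int (t i)"
    unfolding Yq_def using n_pos[of i] by (simp add: m_eq field_simps)
  then show ?thesis by linarith
qed


lemma T_rat: "(of_int (T g y i) :: rat) = of_int (n i) * (\<alpha> i * of_nat g - of_nat (y i))"
  by (simp add: T_def m_eq algebra_simps)

definition Yset :: "nat \<Rightarrow> (nat \<Rightarrow> nat) set" where
  "Yset g = {gs \<in> Pi\<^sub>E {..<k} (\<lambda>_. {0..g}).
      (\<Sum>i<k. gs i) = g \<and> (\<forall>i<k. of_nat (gs i) \<le> \<alpha> i * of_nat g)}"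

definition Pset :: "nat \<Rightarrow> ((nat \<Rightarrow> int) \<times> (nat \<Rightarrow> nat)) set" where
  "Pset g = (SIGMA a:setA k \<alpha>. if nat \<lfloor>Gq a\<rfloor> \<le> g then Cset {..<k} (\<lambda>i. nat (d i)) (g - nat \<lfloor>Gq a\<rfloor>) else {})"

definition phi :: "nat \<Rightarrow> (nat \<Rightarrow> nat) \<Rightarrow> (nat \<Rightarrow> int) \<times> (nat \<Rightarrow> nat)" where
  "phi g y = (restrict (\<lambda>i. T g y i mod A) {..<k}, restrict (\<lambda>i. nat (T g y i div A)) {..<k})"

definition psi :: "(nat \<Rightarrow> int) \<times> (nat \<Rightarrow> nat) \<Rightarrow> nat \<Rightarrow> nat" where
  "psi p = restrict (\<lambda>j. nat \<lfloor>Yq (\<lambda>i. fst p i + A * int (snd p i)) j\<rfloor>) {..<k}"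

lemma dsum: "of_int (\<Sum>i<k. int (c i) * d i) = (of_nat (\<Sum>i<k. c i * nat (d i)) :: rat)"
proof -
  have "(\<Sum>i<k. int (c i) * d i) = int (\<Sum>i<k. c i * nat (d i))"
    unfolding of_nat_sum by (rule sum.cong) (use d_pos in \<open>auto simp: less_imp_le\<close>)
  then show ?thesis by (simp only: of_int_of_nat_eq)
qed

lemma fwd:
  assumes y: "y \<in> Yset g"
  shows "phi g y \<in> Pset g \<and> psi (phi g y) = y"
proof -
  have yPi: "y \<in> Pi\<^sub>E {..<k} (\<lambda>_. {0..g})" and ys: "(\<Sum>i<k. y i) = g"
    and yle: "\<And>i. i < k \<Longrightarrow> of_nat (y i) \<le> \<alpha> i * of_nat g"
    using y unfolding Yset_def by auto
  define t where "t = T g y"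
  have tnn: "t i \<ge> 0" if "i < k" for i
  proof -
    have "(of_int (t i) :: rat) \<ge> 0" unfolding t_def T_rat
      using yle[OF that] n_pos[of i] by simp
    then show ?thesis by simp
  qed
  define a where "a = restrict (\<lambda>i. t i mod A) {..<k}"
  define c where "c = restrict (\<lambda>i. nat (t i div A)) {..<k}"
  have phi_eq: "phi g y = (a, c)" unfolding phi_def a_def c_def t_def by simp
  define s where "s = (\<lambda>i. a i + A * int (c i))"
  have st: "s i = t i" if "i < k" for i
  proof -
    have "t i div A \<ge> 0" using tnn[OF that] A_pos by (simp add: pos_imp_zdiv_nonneg_iff)
    then show ?thesis unfolding s_def a_def c_def using that by (simp add: mult.commute)
  qed
  have Gt: "Gq t = of_nat g" unfolding t_def using Gq_T[OF ys] .
  have Yt: "Yq t j = of_nat (y j)" for j unfolding t_def using Yq_T Gt t_def by simp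
  have Gs: "Gq s = of_nat g" using Gt Gq_cong[of s t] st by simp
  have Ys: "Yq s j = of_nat (y j)" if "j < k" for j using Yt Yq_cong[of s t j] st that by simp
  have ann: "a i \<ge> 0" "a i < A" if "i < k" for i
    unfolding a_def using that A_pos by auto
  have aPi: "a \<in> Pi\<^sub>E {..<k} (\<lambda>_. {0..<A})" unfolding a_def using A_pos by auto
  have aint: "\<exists>z. Yq a j = of_int z" if jk: "j < k" for j
  proof -
    obtain z where "Yq s j = Yq a j + of_int z"
      using Yq_shift[OF jk, of a "\<lambda>i. int (c i)"] unfolding s_def by blast
    then have "Yq a j = of_int (int (y j) - z)" using Ys[OF jk] by simp
    then show ?thesis by blast
  qed
  have aA: "a \<in> setA k \<alpha>" unfolding setA_iff using aPi aint by blast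
  define Cs where "Cs = (\<Sum>i<k. c i * nat (d i))"
  have Gsa: "Gq s = Gq a + of_nat Cs"
    unfolding s_def Gq_shift Cs_def dsum ..
  have Ga_nn: "Gq a \<ge> 0" using Gq_nonneg ann by blast
  have Cs_le: "Cs \<le> g" using Gsa Gs Ga_nn by simp
  have Ga: "Gq a = of_nat (g - Cs)" using Gsa Gs Cs_le by (simp add: of_nat_diff)
  have ba: "nat \<lfloor>Gq a\<rfloor> = g - Cs" unfolding Ga by simp
  have cle: "c i \<le> Cs" if "i < k" for i
  proof -
    have "c i \<le> c i * nat (d i)" using d_pos[OF that] by (simp add: Suc_le_eq)
    also have "\<dots> \<le> Cs" unfolding Cs_def by (rule member_le_sum) (use that in auto)
    finally show ?thesis .
  qed
  have cC: "c \<in> Cset {..<k} (\<lambda>i. nat (d i)) Cs"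
    unfolding Cset_def Cs_def using cle unfolding Cs_def c_def by auto
  have P: "phi g y \<in> Pset g"
    unfolding phi_eq Pset_def using aA ba Cs_le cC by (simp add: diff_diff_cancel)
  have "psi (phi g y) = y"
  proof
    fix j
    show "psi (phi g y) j = y j"
    proof (cases "j < k")
      case True
      then show ?thesis unfolding phi_eq psi_def using Ys[OF True] s_def by simp
    next
      case False
      then show ?thesis unfolding phi_eq psi_def using yPi by (auto simp: PiE_iff extensional_def)
    qed
  qed
  then show ?thesis using P by blast
qed


lemma bwd:
  assumes p: "p \<in> Pset g"
  shows "psi p \<in> Yset g \<and> phi g (psi p) = p"
proof -
  obtain a c where pac: "p = (a, c)" by (cases p)
  define b where "b = nat \<lfloor>Gq a\<rfloor>"
  have aA: "a \<in> setA k \<alpha>" and bg: "b \<le> g" and cC: "c \<in> Cset {..<k} (\<lambda>i. nat (d i)) (g - b)"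
    using p unfolding pac Pset_def b_def by (auto split: if_splits)
  have aPi: "a \<in> Pi\<^sub>E {..<k} (\<lambda>_. {0..<A})" and aint: "\<forall>j<k. \<exists>z. Yq a j = of_int z"
    using aA unfolding setA_iff by auto
  have cPi: "c \<in> Pi\<^sub>E {..<k} (\<lambda>_. {..g - b})" and cs: "(\<Sum>i<k. c i * nat (d i)) = g - b"
    using cC unfolding Cset_def by auto
  have "\<forall>j. \<exists>z. j < k \<longrightarrow> Yq a j = of_int z" using aint by blast
  then have "\<exists>z. \<forall>j. j < k \<longrightarrow> Yq a j = of_int (z j)" by (rule choice)
  then obtain z where z: "\<forall>j<k. Yq a j = of_int (z j)" by blast
  have ann: "a i \<ge> 0" "a i < A" if "i < k" for i using PiE_mem[OF aPi, of i] that by auto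
  define Z where "Z = (\<Sum>j<k. z j)"
  have GZ: "Gq a = of_int Z" unfolding Z_def sumY[symmetric] of_int_sum
    by (rule sum.cong) (use z in auto)
  have "Gq a \<ge> 0" using Gq_nonneg ann by blast
  then have "Z \<ge> 0" unfolding GZ by simp
  then have Ga: "Gq a = of_nat b" unfolding b_def GZ by simp
  define s where "s = (\<lambda>i. a i + A * int (c i))"
  have snn: "s i \<ge> 0" if "i < k" for i unfolding s_def using ann[OF that] A_pos by simp
  have Gs: "Gq s = of_nat g"
    unfolding s_def Gq_shift dsum cs Ga using bg by (simp add: of_nat_diff)
  have Ysi: "\<exists>w. Yq s j = of_int w" if jk: "j < k" for j
  proof -
    obtain w where "Yq s j = Yq a j + of_int w"
      using Yq_shift[OF jk, of a "\<lambda>i. int (c i)"] unfolding s_def by blast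
    then have "Yq s j = of_int (z j + w)" using z jk by simp
    then show ?thesis by blast
  qed
  define y where "y = psi p"
  have y_eq: "of_nat (y j) = Yq s j" if jk: "j < k" for j
  proof -
    obtain w where w: "Yq s j = of_int w" using Ysi[OF jk] by blast
    have "Yq s j \<ge> 0" using Yq_nonneg[OF jk] snn by blast
    then have "w \<ge> 0" using w by simp
    then show ?thesis unfolding y_def psi_def pac s_def using jk w[unfolded s_def] by simp
  qed
  have ysum: "(\<Sum>i<k. y i) = g"
  proof -
    have "(of_nat (\<Sum>i<k. y i) :: rat) = (\<Sum>i<k. Yq s i)"
      unfolding of_nat_sum by (rule sum.cong) (use y_eq in auto)
    then have "(of_nat (\<Sum>i<k. y i) :: rat) = of_nat g" unfolding sumY Gs .
    then show ?thesis by (simp only: of_nat_eq_iff)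
  qed
  have yle: "of_nat (y i) \<le> \<alpha> i * of_nat g" if "i < k" for i
  proof -
    have "of_int (s i) / of_int (n i) \<ge> (0::rat)"
      using snn[OF that] n_pos[of i] by simp
    then show ?thesis unfolding y_eq[OF that] Yq_def Gs by simp
  qed
  have yleg: "y i \<le> g" if "i < k" for i
    unfolding ysum[symmetric] by (rule member_le_sum) (use that in auto)
  have yPi: "y \<in> Pi\<^sub>E {..<k} (\<lambda>_. {0..g})"
    using yleg unfolding y_def psi_def by auto
  have yY: "y \<in> Yset g" unfolding Yset_def using yPi ysum yle by blast
  have Ts: "T g y i = s i" if "i < k" for i
    unfolding T_def using T_Yq[OF Gs y_eq[OF that]] .
  have "phi g y = (a, c)"
  proof -
    have "restrict (\<lambda>i. T g y i mod A) {..<k} = a"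
    proof
      fix i show "restrict (\<lambda>i. T g y i mod A) {..<k} i = a i"
        using Ts ann aPi A_pos unfolding s_def by (auto simp: PiE_iff extensional_def)
    qed
    moreover have "restrict (\<lambda>i. nat (T g y i div A)) {..<k} = c"
    proof
      fix i show "restrict (\<lambda>i. nat (T g y i div A)) {..<k} i = c i"
        using Ts ann cPi A_pos unfolding s_def by (auto simp: PiE_iff extensional_def)
    qed
    ultimately show ?thesis unfolding phi_def by simp
  qed
  then show ?thesis using yY pac y_def by simp
qed

lemma bij: "bij_betw (phi g) (Yset g) (Pset g)"
  by (rule bij_betw_byWitness[where f' = psi]) (use fwd bwd in blast)+

end

theorem mainTheorem8:
  fixes k :: nat and \<alpha> :: "nat \<Rightarrow> rat"
  assumes "k \<ge> 2"
    and "\<forall>i<k. \<alpha> i \<ge> 0"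
    and "\<forall>j<k. (\<Sum>i\<in>{..<k} - {j}. \<alpha> i) \<le> 1"
    and "(\<Sum>i<k. \<alpha> i) > 1"
  shows "(Abs_fps (\<lambda>g. of_nat (fcount k \<alpha> g)) :: rat fps)
    = (\<Sum>a\<in>setA k \<alpha>. fps_X ^ nat \<lfloor>bval k \<alpha> a\<rfloor>)
      / (\<Prod>i<k. 1 - fps_X ^ nat (bigN k \<alpha> div den (\<alpha> i)))"
proof -
  interpret cone k \<alpha> using assms by unfold_locales auto
  have dn_eq: "nat (bigN k \<alpha> div den (\<alpha> i)) = nat (d i)" for i unfolding d_def n_def ..
  define Q where "Q = (\<Prod>i<k. 1 - fps_X ^ nat (d i) :: rat fps)"
  define Gs where "Gs = (\<Prod>i<k. geo (nat (d i)))"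
  define P where "P = (\<Sum>a\<in>setA k \<alpha>. fps_X ^ nat \<lfloor>bval k \<alpha> a\<rfloor> :: rat fps)"
  define F where "F = (Abs_fps (\<lambda>g. of_nat (fcount k \<alpha> g)) :: rat fps)"
  have dnp: "\<forall>i\<in>{..<k}. nat (d i) > 0" using d_pos by simp
  have QG: "Q * Gs = 1" unfolding Q_def Gs_def prod.distrib[symmetric]
    by (rule prod.neutral) (use geo_inv dnp in auto)
  then have Qnz: "Q \<noteq> 0" by auto
  have "setA k \<alpha> \<subseteq> Pi\<^sub>E {..<k} (\<lambda>_. {0..<A})" using setA_iff by blast
  moreover have "finite (Pi\<^sub>E {..<k} (\<lambda>_. {0..<A}))" by (intro finite_PiE) auto
  ultimately have fin: "finite (setA k \<alpha>)" by (rule finite_subset)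
  have FP: "F = P * Gs"
  proof (rule fps_ext)
    fix g
    have "fps_nth (P * Gs) g = (\<Sum>a\<in>setA k \<alpha>. fps_nth (fps_X ^ nat \<lfloor>bval k \<alpha> a\<rfloor> * Gs) g)"
      unfolding P_def sum_distrib_right fps_sum_nth ..
    also have "\<dots> = (\<Sum>a\<in>setA k \<alpha>. of_nat (card (if nat \<lfloor>Gq a\<rfloor> \<le> g then Cset {..<k} (\<lambda>i. nat (d i)) (g - nat \<lfloor>Gq a\<rfloor>) else {})))"
      by (rule sum.cong) (auto simp: fps_X_power_mult_nth Gs_def prod_geo[of "{..<k}" "\<lambda>i. nat (d i)", OF finite_lessThan dnp] bval_eq)
    also have "\<dots> = of_nat (card (Pset g))"
      unfolding Pset_def of_nat_sum[symmetric] by (subst card_SigmaI) (auto simp: fin Cset_finite)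
    also have "card (Pset g) = card (Yset g)" using bij_betw_same_card[OF bij] by simp
    finally show "fps_nth F g = fps_nth (P * Gs) g" unfolding F_def fcount_def Yset_def by simp
  qed
  have "F * Q = P" unfolding FP using QG by (simp add: mult.assoc mult.commute)
  then have "P / Q = F" using fps_divide_times_eq[OF Qnz, of F] by simp
  then show ?thesis unfolding dn_eq P_def Q_def F_def by simp
qed

end
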